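(* Let $k\ge 4$ and $n>2k$ be integers, and let $$\mathcal C=\mathcal A_3(n,k)=\Big\{A\in\binom{[n]}{k}: 1\in A,\ A\cap\{2,3,4\}\neq\varnothing\Big\}\cup\Big\{A\in\binom{[n]}{k}:\{2,3,4\}\subset A\Big\},$$ and let $\mathcal S_1=\{A\in\binom{[n]}{k}: 1\in A\}$. Then $$|\mathcal D(\mathcal C)|=5\sum_{i=0}^{k-2}\binom{n-4}{i}+3\sum_{i=0}^{k-3}\binom{n-4}{i},\qquad |\mathcal D(\mathcal S_1)|-|\mathcal D(\mathcal C)|=\binom{n-4}{k-1}-\binom{n-3}{k-2}.$$ In particular, if $(n-k-1)(n-k-2)<(n-3)(k-1)$ (equivalently $n^2-(3k+2)n+k^2+6k-1<0$), then $\mathcal C$ is an intersecting family with $|\mathcal D(\mathcal C)|>\sum_{0\le\ell<k}\binom{n-1}{\ell}$.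
   Context: $[n]=\{1,\dots,n\}$; $\binom{[n]}{k}$ is the family of all $k$-element subsets of $[n]$. $\mathcal D(\mathcal F):=\{F\setminus F' : F,F'\in\mathcal F\}$. Note $|\mathcal D(\mathcal S_1)|=\sum_{0\le\ell<k}\binom{n-1}{\ell}$. *)

theory Defs
  imports Main
begin

definition ksubsets :: "nat \<Rightarrow> nat \<Rightarrow> nat set set" where
  "ksubsets n k = {A. A \<subseteq> {1..n} \<and> card A = k}"

definition diff_family :: "'a set set \<Rightarrow> 'a set set" where
  "diff_family F = {A - B | A B. A \<in> F \<and> B \<in> F}"

definition intersecting :: "'a set set \<Rightarrow> bool" where
  "intersecting F \<longleftrightarrow> (\<forall>A\<in>F. \<forall>B\<in>F. A \<inter> B \<noteq> {})"

definition A3 :: "nat \<Rightarrow> nat \<Rightarrow> nat set set" where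
  "A3 n k = {A \<in> ksubsets n k. 1 \<in> A \<and> A \<inter> {2,3,4} \<noteq> {}}
          \<union> {A \<in> ksubsets n k. {2,3,4} \<subseteq> A}"

definition star1 :: "nat \<Rightarrow> nat \<Rightarrow> nat set set" where
  "star1 n k = {A \<in> ksubsets n k. 1 \<in> A}"

end

theory Submission
  imports Defs
begin


definition good :: "nat set \<Rightarrow> bool" where
  "good S \<longleftrightarrow> (1 \<in> S \<and> S \<inter> {2,3,4} \<noteq> {}) \<or> {2,3,4} \<subseteq> S"

lemma A3_alt: "A3 n k = {A \<in> ksubsets n k. good A}"
  unfolding A3_def good_def by auto

lemma construct:
  assumes "finite A1" "finite B1" "finite W" "card B1 \<le> card A1" "card A1 \<le> k"
    "W \<inter> A1 = {}" "W \<inter> B1 = {}" "k - card B1 \<le> card W"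
  shows "\<exists>F G. F \<subseteq> G \<and> G \<subseteq> W \<and> card (A1 \<union> F) = k \<and> card (B1 \<union> G) = k"
proof -
  obtain G where G: "G \<subseteq> W" "card G = k - card B1" "finite G"
    using obtain_subset_with_card_n[OF assms(8)] by blast
  have "k - card A1 \<le> card G" using assms G by simp
  then obtain F where F: "F \<subseteq> G" "card F = k - card A1" "finite F"
    using obtain_subset_with_card_n by blast
  have "card (A1 \<union> F) = card A1 + card F"
    by (rule card_Un_disjoint) (use assms F G in auto)
  moreover have "card (B1 \<union> G) = card B1 + card G"
    by (rule card_Un_disjoint) (use assms F G in auto)
  ultimately show ?thesis using F G assms by (intro exI[of _ F] exI[of _ G]) auto
qed

lemma in_D_gen:
  assumes up: "\<And>S T. P S \<Longrightarrow> S \<subseteq> T \<Longrightarrow> P T"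
    and "A1 \<subseteq> {1..n}" "B1 \<subseteq> {1..n}" "W \<subseteq> {1..n}" "card B1 \<le> card A1" "card A1 \<le> k"
    "W \<inter> A1 = {}" "W \<inter> B1 = {}" "k - card B1 \<le> card W" "P A1" "P B1"
  shows "A1 - B1 \<in> diff_family {A \<in> ksubsets n k. P A}"
proof -
  have fin: "finite A1" "finite B1" "finite W" using assms(2-4) finite_subset[of _ "{1..n}"] by auto
  obtain F G where FG: "F \<subseteq> G" "G \<subseteq> W" "card (A1 \<union> F) = k" "card (B1 \<union> G) = k"
    using construct[OF fin assms(5-9)] by blast
  have "A1 \<union> F \<in> {A \<in> ksubsets n k. P A}"
    using FG assms up[of A1 "A1 \<union> F"] unfolding ksubsets_def by auto
  moreover have "B1 \<union> G \<in> {A \<in> ksubsets n k. P A}"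
    using FG assms up[of B1 "B1 \<union> G"] unfolding ksubsets_def by auto
  moreover have "(A1 \<union> F) - (B1 \<union> G) = A1 - B1" using FG assms by auto
  ultimately show ?thesis unfolding diff_family_def by blast
qed

lemma card_low:
  assumes "finite S"
  shows "card {r. r \<subseteq> S \<and> card r \<le> b} = (\<Sum>i=0..b. card S choose i)"
proof -
  have "{r. r \<subseteq> S \<and> card r \<le> b} = (\<Union>i\<in>{0..b}. {r. r \<subseteq> S \<and> card r = i})" by auto
  also have "card \<dots> = (\<Sum>i\<in>{0..b}. card {r. r \<subseteq> S \<and> card r = i})"
    by (rule card_UN_disjoint) (use assms in \<open>auto intro: finite_subset[of _ "Pow S"]\<close>)
  also have "\<dots> = (\<Sum>i=0..b. card S choose i)" using n_subsets[OF assms] by simp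
  finally show ?thesis .
qed

lemma Srec: "(\<Sum>i=0..Suc b. (Suc N) choose i) = (\<Sum>i=0..Suc b. N choose i) + (\<Sum>i=0..b. N choose i)"
  by (induction b) auto

lemma binom_id:
  assumes "j + 3 \<le> m"
  shows "(m choose (j+3)) * ((j+3) * (m+1)) = (Suc m choose (j+2)) * ((m-j-1)*(m-j-2))"
proof -
  have e1: "(j+3) * (m choose (j+3)) = m * ((m-1) choose (j+2))"
    using binomial_absorption[of "j+2" m] by (simp add: numeral_eq_Suc)
  have e2: "(m - (j+2)) * (m choose (j+2)) = m * ((m-1) choose (j+2))"
    using binomial_absorb_comp .
  have e3: "(Suc m - (j+2)) * (Suc m choose (j+2)) = Suc m * (m choose (j+2))"
    using binomial_absorb_comp[of "Suc m" "j+2"] by simp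
  have "(m choose (j+3)) * ((j+3) * (m+1)) = (m+1) * ((j+3) * (m choose (j+3)))" by (simp add: algebra_simps)
  also have "\<dots> = (m+1) * ((m - (j+2)) * (m choose (j+2)))" using e1 e2 by simp
  also have "\<dots> = (m-(j+2)) * ((m+1) * (m choose (j+2)))" by (rule mult.left_commute)
  also have "\<dots> = (m-(j+2)) * ((Suc m - (j+2)) * (Suc m choose (j+2)))" using e3 by simp
  also have "\<dots> = (Suc m choose (j+2)) * ((m-j-1)*(m-j-2))"
    using assms by (simp add: Suc_diff_le)
  finally show ?thesis .
qed

lemma good_inter: "good A \<Longrightarrow> good B \<Longrightarrow> \<exists>c. c \<in> A \<and> c \<in> B"
  unfolding good_def by auto
lemma good_two:
  assumes "good A" "{1,2,3,4} \<inter> A \<subseteq> B"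
  shows "\<exists>c1 c2. c1 \<noteq> c2 \<and> c1 \<in> A \<and> c1 \<in> B \<and> c2 \<in> A \<and> c2 \<in> B"
proof (cases "1 \<in> A \<and> A \<inter> {2,3,4} \<noteq> {}")
  case True
  then obtain j where j: "j \<in> A" "j \<in> {2,3,4::nat}" by auto
  have "(1::nat) \<noteq> j" using j by auto
  thus ?thesis using True j assms(2) by blast
next
  case False
  hence "{2,3,4} \<subseteq> A" using assms(1) unfolding good_def by blast
  thus ?thesis using assms(2) by (intro exI[of _ "2::nat"] exI[of _ "3::nat"]) auto
qed


definition Low :: "nat \<Rightarrow> nat \<Rightarrow> nat set set" where
  "Low n b = {r. r \<subseteq> {5..n} \<and> card r \<le> b}"
definition Img :: "nat \<Rightarrow> nat set \<Rightarrow> nat \<Rightarrow> nat set set" where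
  "Img n t b = (\<lambda>r. t \<union> r) ` Low n b"
definition Gset :: "nat \<Rightarrow> nat \<Rightarrow> nat set set" where
  "Gset n k = Img n {} (k-2) \<union> Img n {1} (k-2) \<union> Img n {2} (k-2) \<union> Img n {3} (k-2)
     \<union> Img n {4} (k-2) \<union> Img n {2,3} (k-3) \<union> Img n {2,4} (k-3) \<union> Img n {3,4} (k-3)"

lemma good_up: "good S \<Longrightarrow> S \<subseteq> T \<Longrightarrow> good T"
  unfolding good_def by blast

lemma inD:
  assumes "k \<ge> 4" "n > 2*k" "r \<subseteq> {5..n}" "a \<subseteq> {1,2,3,4}" "B1 \<subseteq> {1,2,3,4}"
    "card B1 \<le> card a + card r" "card a + card r \<le> k" "good (a \<union> r)" "good B1"
    "k - card B1 \<le> n - 4 - card r"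
  shows "(a \<union> r) - B1 \<in> diff_family (A3 n k)"
proof -
  have fr: "finite r" using assms(3) finite_subset by blast
  have a4: "\<forall>x\<in>a. x \<le> 4" using assms(4) by auto
  have r5: "\<forall>x\<in>r. 5 \<le> x" using assms(3) by auto
  have ar: "a \<inter> r = {}" using a4 r5 by fastforce
  have fa: "finite a" using assms(4) finite_subset by blast
  have ca: "card (a \<union> r) = card a + card r" using card_Un_disjoint[OF fa fr ar] .
  have cW: "card ({5..n} - r) = n - 4 - card r"
    using card_Diff_subset[OF fr assms(3)] by simp
  show ?thesis unfolding A3_alt
    apply (rule in_D_gen[where W="{5..n} - r"])
    using assms ca cW good_up by auto
qed

lemma img_mem: "X \<in> Img n t b \<Longrightarrow> \<exists>r. X = t \<union> r \<and> r \<subseteq> {5..n} \<and> card r \<le> b"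
  unfolding Img_def Low_def by auto

lemma case_e:
  assumes "k \<ge> 4" "n > 2*k" "r \<subseteq> {5..n}" "card r \<le> k-2"
  shows "{} \<union> r \<in> diff_family (A3 n k)"
proof -
  have r5: "\<forall>x\<in>r. 5 \<le> x" using assms(3) by auto
  have "({1,2} \<union> r) - {1,2} \<in> diff_family (A3 n k)"
  proof (rule inD)
    show "k - card ({1,2}::nat set) \<le> n - 4 - card r" using assms by simp
    show "good ({1,2} \<union> r)" by (simp add: good_def)
    show "good ({1,2}::nat set)" by (simp add: good_def)
    show "card ({1,2}::nat set) \<le> card ({1,2}::nat set) + card r" using assms by simp
    show "card ({1,2}::nat set) + card r \<le> k" using assms by simp
  qed (use assms in auto)
  moreover have "({1,2} \<union> r) - {1,2} = {} \<union> r" using r5 by force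
  ultimately show ?thesis by simp
qed

lemma case_o1a:
  assumes "k \<ge> 4" "n > 2*k" "r \<subseteq> {5..n}" "card r \<le> k-3"
  shows "{1} \<union> r \<in> diff_family (A3 n k)"
proof -
  have r5: "\<forall>x\<in>r. 5 \<le> x" using assms(3) by auto
  have "({1,2,3} \<union> r) - {2,3,4} \<in> diff_family (A3 n k)"
  proof (rule inD)
    show "k - card ({2,3,4}::nat set) \<le> n - 4 - card r" using assms by simp
    show "good ({1,2,3} \<union> r)" by (simp add: good_def)
    show "good ({2,3,4}::nat set)" by (simp add: good_def)
    show "card ({2,3,4}::nat set) \<le> card ({1,2,3}::nat set) + card r" using assms by simp
    show "card ({1,2,3}::nat set) + card r \<le> k" using assms by simp
  qed (use assms in auto)
  moreover have "({1,2,3} \<union> r) - {2,3,4} = {1} \<union> r" using r5 by force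
  ultimately show ?thesis by simp
qed

lemma case_o1b:
  assumes "k \<ge> 4" "n > 2*k" "r \<subseteq> {5..n}" "card r \<le> k-2" "\<not> card r \<le> k-3"
  shows "{1} \<union> r \<in> diff_family (A3 n k)"
proof -
  have r5: "\<forall>x\<in>r. 5 \<le> x" using assms(3) by auto
  have "({1,2} \<union> r) - {2,3,4} \<in> diff_family (A3 n k)"
  proof (rule inD)
    show "k - card ({2,3,4}::nat set) \<le> n - 4 - card r" using assms by simp
    show "good ({1,2} \<union> r)" by (simp add: good_def)
    show "good ({2,3,4}::nat set)" by (simp add: good_def)
    show "card ({2,3,4}::nat set) \<le> card ({1,2}::nat set) + card r" using assms by simp
    show "card ({1,2}::nat set) + card r \<le> k" using assms by simp
  qed (use assms in auto)
  moreover have "({1,2} \<union> r) - {2,3,4} = {1} \<union> r" using r5 by force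
  ultimately show ?thesis by simp
qed

lemma case_o2:
  assumes "k \<ge> 4" "n > 2*k" "r \<subseteq> {5..n}" "card r \<le> k-2"
  shows "{2} \<union> r \<in> diff_family (A3 n k)"
proof -
  have r5: "\<forall>x\<in>r. 5 \<le> x" using assms(3) by auto
  have "({1,2} \<union> r) - {1,3} \<in> diff_family (A3 n k)"
  proof (rule inD)
    show "k - card ({1,3}::nat set) \<le> n - 4 - card r" using assms by simp
    show "good ({1,2} \<union> r)" by (simp add: good_def)
    show "good ({1,3}::nat set)" by (simp add: good_def)
    show "card ({1,3}::nat set) \<le> card ({1,2}::nat set) + card r" using assms by simp
    show "card ({1,2}::nat set) + card r \<le> k" using assms by simp
  qed (use assms in auto)
  moreover have "({1,2} \<union> r) - {1,3} = {2} \<union> r" using r5 by force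
  ultimately show ?thesis by simp
qed

lemma case_o3:
  assumes "k \<ge> 4" "n > 2*k" "r \<subseteq> {5..n}" "card r \<le> k-2"
  shows "{3} \<union> r \<in> diff_family (A3 n k)"
proof -
  have r5: "\<forall>x\<in>r. 5 \<le> x" using assms(3) by auto
  have "({1,3} \<union> r) - {1,2} \<in> diff_family (A3 n k)"
  proof (rule inD)
    show "k - card ({1,2}::nat set) \<le> n - 4 - card r" using assms by simp
    show "good ({1,3} \<union> r)" by (simp add: good_def)
    show "good ({1,2}::nat set)" by (simp add: good_def)
    show "card ({1,2}::nat set) \<le> card ({1,3}::nat set) + card r" using assms by simp
    show "card ({1,3}::nat set) + card r \<le> k" using assms by simp
  qed (use assms in auto)
  moreover have "({1,3} \<union> r) - {1,2} = {3} \<union> r" using r5 by force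
  ultimately show ?thesis by simp
qed

lemma case_o4:
  assumes "k \<ge> 4" "n > 2*k" "r \<subseteq> {5..n}" "card r \<le> k-2"
  shows "{4} \<union> r \<in> diff_family (A3 n k)"
proof -
  have r5: "\<forall>x\<in>r. 5 \<le> x" using assms(3) by auto
  have "({1,4} \<union> r) - {1,2} \<in> diff_family (A3 n k)"
  proof (rule inD)
    show "k - card ({1,2}::nat set) \<le> n - 4 - card r" using assms by simp
    show "good ({1,4} \<union> r)" by (simp add: good_def)
    show "good ({1,2}::nat set)" by (simp add: good_def)
    show "card ({1,2}::nat set) \<le> card ({1,4}::nat set) + card r" using assms by simp
    show "card ({1,4}::nat set) + card r \<le> k" using assms by simp
  qed (use assms in auto)
  moreover have "({1,4} \<union> r) - {1,2} = {4} \<union> r" using r5 by force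
  ultimately show ?thesis by simp
qed

lemma case_p23:
  assumes "k \<ge> 4" "n > 2*k" "r \<subseteq> {5..n}" "card r \<le> k-3"
  shows "{2,3} \<union> r \<in> diff_family (A3 n k)"
proof -
  have r5: "\<forall>x\<in>r. 5 \<le> x" using assms(3) by auto
  have "({1,2,3} \<union> r) - {1,4} \<in> diff_family (A3 n k)"
  proof (rule inD)
    show "k - card ({1,4}::nat set) \<le> n - 4 - card r" using assms by simp
    show "good ({1,2,3} \<union> r)" by (simp add: good_def)
    show "good ({1,4}::nat set)" by (simp add: good_def)
    show "card ({1,4}::nat set) \<le> card ({1,2,3}::nat set) + card r" using assms by simp
    show "card ({1,2,3}::nat set) + card r \<le> k" using assms by simp
  qed (use assms in auto)
  moreover have "({1,2,3} \<union> r) - {1,4} = {2,3} \<union> r" using r5 by force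
  ultimately show ?thesis by simp
qed

lemma case_p24:
  assumes "k \<ge> 4" "n > 2*k" "r \<subseteq> {5..n}" "card r \<le> k-3"
  shows "{2,4} \<union> r \<in> diff_family (A3 n k)"
proof -
  have r5: "\<forall>x\<in>r. 5 \<le> x" using assms(3) by auto
  have "({1,2,4} \<union> r) - {1,3} \<in> diff_family (A3 n k)"
  proof (rule inD)
    show "k - card ({1,3}::nat set) \<le> n - 4 - card r" using assms by simp
    show "good ({1,2,4} \<union> r)" by (simp add: good_def)
    show "good ({1,3}::nat set)" by (simp add: good_def)
    show "card ({1,3}::nat set) \<le> card ({1,2,4}::nat set) + card r" using assms by simp
    show "card ({1,2,4}::nat set) + card r \<le> k" using assms by simp
  qed (use assms in auto)
  moreover have "({1,2,4} \<union> r) - {1,3} = {2,4} \<union> r" using r5 by force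
  ultimately show ?thesis by simp
qed

lemma case_p34:
  assumes "k \<ge> 4" "n > 2*k" "r \<subseteq> {5..n}" "card r \<le> k-3"
  shows "{3,4} \<union> r \<in> diff_family (A3 n k)"
proof -
  have r5: "\<forall>x\<in>r. 5 \<le> x" using assms(3) by auto
  have "({1,3,4} \<union> r) - {1,2} \<in> diff_family (A3 n k)"
  proof (rule inD)
    show "k - card ({1,2}::nat set) \<le> n - 4 - card r" using assms by simp
    show "good ({1,3,4} \<union> r)" by (simp add: good_def)
    show "good ({1,2}::nat set)" by (simp add: good_def)
    show "card ({1,2}::nat set) \<le> card ({1,3,4}::nat set) + card r" using assms by simp
    show "card ({1,3,4}::nat set) + card r \<le> k" using assms by simp
  qed (use assms in auto)
  moreover have "({1,3,4} \<union> r) - {1,2} = {3,4} \<union> r" using r5 by force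
  ultimately show ?thesis by simp
qed

lemma Gset_sub:
  assumes "k \<ge> 4" "n > 2*k"
  shows "Gset n k \<subseteq> diff_family (A3 n k)"
proof
  fix X assume "X \<in> Gset n k"
  then consider (e) "X \<in> Img n {} (k-2)" | (o1) "X \<in> Img n {1} (k-2)" | (o2) "X \<in> Img n {2} (k-2)"
    | (o3) "X \<in> Img n {3} (k-2)" | (o4) "X \<in> Img n {4} (k-2)" | (p23) "X \<in> Img n {2,3} (k-3)"
    | (p24) "X \<in> Img n {2,4} (k-3)" | (p34) "X \<in> Img n {3,4} (k-3)"
    unfolding Gset_def by blast
  then show "X \<in> diff_family (A3 n k)"
  proof cases
    case e
    from img_mem[OF e] obtain r where r: "r \<subseteq> {5..n}" and r2: "card r \<le> k-2" and X: "X = {} \<union> r"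
      by blast
    show ?thesis unfolding X by (rule case_e[OF assms r r2])
  next
    case o1
    from img_mem[OF o1] obtain r where r: "X = {1} \<union> r" "r \<subseteq> {5..n}" "card r \<le> k-2" by blast
    show ?thesis
    proof (cases "card r \<le> k-3")
      case True then show ?thesis unfolding r(1) by (rule case_o1a[OF assms r(2)])
    next
      case False then show ?thesis unfolding r(1) by (rule case_o1b[OF assms r(2,3)])
    qed
  next
    case o2
    from img_mem[OF o2] obtain r where r: "r \<subseteq> {5..n}" and r2: "card r \<le> k-2" and X: "X = {2} \<union> r"
      by blast
    show ?thesis unfolding X by (rule case_o2[OF assms r r2])
  next
    case o3
    from img_mem[OF o3] obtain r where r: "r \<subseteq> {5..n}" and r2: "card r \<le> k-2" and X: "X = {3} \<union> r"
      by blast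
    show ?thesis unfolding X by (rule case_o3[OF assms r r2])
  next
    case o4
    from img_mem[OF o4] obtain r where r: "r \<subseteq> {5..n}" and r2: "card r \<le> k-2" and X: "X = {4} \<union> r"
      by blast
    show ?thesis unfolding X by (rule case_o4[OF assms r r2])
  next
    case p23
    from img_mem[OF p23] obtain r where r: "r \<subseteq> {5..n}" and r2: "card r \<le> k-3" and X: "X = {2,3} \<union> r"
      by blast
    show ?thesis unfolding X by (rule case_p23[OF assms r r2])
  next
    case p24
    from img_mem[OF p24] obtain r where r: "r \<subseteq> {5..n}" and r2: "card r \<le> k-3" and X: "X = {2,4} \<union> r"
      by blast
    show ?thesis unfolding X by (rule case_p24[OF assms r r2])
  next
    case p34
    from img_mem[OF p34] obtain r where r: "r \<subseteq> {5..n}" and r2: "card r \<le> k-3" and X: "X = {3,4} \<union> r"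
      by blast
    show ?thesis unfolding X by (rule case_p34[OF assms r r2])
  qed
qed

lemma img_intro: "X = t \<union> r \<Longrightarrow> r \<subseteq> {5..n} \<Longrightarrow> card r \<le> b \<Longrightarrow> X \<in> Img n t b"
  unfolding Img_def Low_def by auto

lemma finish: "X = t \<union> r \<Longrightarrow> r \<subseteq> {5..n} \<Longrightarrow> card X = card t + card r \<Longrightarrow> t = t0
   \<Longrightarrow> card X \<le> card t0 + b \<Longrightarrow> X \<in> Img n t0 b"
  by (rule img_intro) auto

lemma A3_good: "A \<in> A3 n k \<Longrightarrow> good A \<and> A \<subseteq> {1..n} \<and> card A = k \<and> finite A"
  unfolding A3_alt ksubsets_def using finite_subset[of A "{1..n}"] by auto

lemma D_sub_Gset:
  assumes "k \<ge> 4" "n > 2*k"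
  shows "diff_family (A3 n k) \<subseteq> Gset n k"
proof
  fix X assume "X \<in> diff_family (A3 n k)"
  then obtain A B where AB: "X = A - B" "A \<in> A3 n k" "B \<in> A3 n k" unfolding diff_family_def by blast
  have gA: "good A" and sA: "A \<subseteq> {1..n}" and cA: "card A = k" and fA: "finite A"
    using A3_good[OF AB(2)] by auto
  have gB: "good B" using A3_good[OF AB(3)] by auto
  define t where "t = X \<inter> {1,2,3,4}"
  define r where "r = X \<inter> {5..n}"
  have Xtr: "X = t \<union> r" unfolding t_def r_def using AB(1) sA by auto
  have rs: "r \<subseteq> {5..n}" unfolding r_def by auto
  have fX: "finite X" using AB(1) fA by auto
  have cX: "card X = card t + card r"
    unfolding Xtr by (rule card_Un_disjoint) (use fX in \<open>auto simp: t_def r_def\<close>)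
  obtain c where c: "c \<in> A" "c \<in> B" using good_inter[OF gA gB] by blast
  have "X \<subseteq> A - {c}" using AB(1) c by auto
  hence k1: "card X \<le> k - 1" using card_mono[of "A - {c}" X] fA cA c by auto
  have one: "1 \<in> X \<Longrightarrow> 2 \<notin> X \<and> 3 \<notin> X \<and> 4 \<notin> X" using AB(1) gB unfolding good_def by auto
  have notT: "\<not> {2,3,4} \<subseteq> X" using AB(1) gB unfolding good_def by auto
  have k2: "card X \<le> k - 2" if "t = {}"
  proof -
    have "{1,2,3,4} \<inter> A \<subseteq> B" using that AB(1) unfolding t_def by auto
    then obtain c1 c2 where "c1 \<noteq> c2" "c1 \<in> A" "c1 \<in> B" "c2 \<in> A" "c2 \<in> B"
      using good_two[OF gA] by blast
    hence "X \<subseteq> A - {c1,c2}" using AB(1) by auto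
    thus ?thesis using card_mono[of "A - {c1,c2}" X] fA cA \<open>c1 \<noteq> c2\<close> \<open>c1 \<in> A\<close> \<open>c2 \<in> A\<close> by auto
  qed
  show "X \<in> Gset n k"
  proof (cases "1 \<in> X")
    case True
    hence tt: "t = {1}" using one unfolding t_def by auto
    have "X \<in> Img n {1} (k-2)" by (rule finish[OF Xtr rs cX tt]) (use k1 assms in simp)
    thus ?thesis unfolding Gset_def by blast
  next
    case n1: False
    show ?thesis
    proof (cases "2 \<in> X")
      case t2: True
      show ?thesis
      proof (cases "3 \<in> X")
        case t3: True
        hence tt: "t = {2,3}" using n1 t2 notT unfolding t_def by auto
        have "X \<in> Img n {2,3} (k-3)" by (rule finish[OF Xtr rs cX tt]) (use k1 assms in simp)
        thus ?thesis unfolding Gset_def by blast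
      next
        case n3: False
        show ?thesis
        proof (cases "4 \<in> X")
          case True
          hence tt: "t = {2,4}" using n1 t2 n3 unfolding t_def by auto
          have "X \<in> Img n {2,4} (k-3)" by (rule finish[OF Xtr rs cX tt]) (use k1 assms in simp)
          thus ?thesis unfolding Gset_def by blast
        next
          case False
          hence tt: "t = {2}" using n1 t2 n3 unfolding t_def by auto
          have "X \<in> Img n {2} (k-2)" by (rule finish[OF Xtr rs cX tt]) (use k1 assms in simp)
          thus ?thesis unfolding Gset_def by blast
        qed
      qed
    next
      case n2: False
      show ?thesis
      proof (cases "3 \<in> X")
        case t3: True
        show ?thesis
        proof (cases "4 \<in> X")
          case True
          hence tt: "t = {3,4}" using n1 n2 t3 unfolding t_def by auto
          have "X \<in> Img n {3,4} (k-3)" by (rule finish[OF Xtr rs cX tt]) (use k1 assms in simp)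
          thus ?thesis unfolding Gset_def by blast
        next
          case False
          hence tt: "t = {3}" using n1 n2 t3 unfolding t_def by auto
          have "X \<in> Img n {3} (k-2)" by (rule finish[OF Xtr rs cX tt]) (use k1 assms in simp)
          thus ?thesis unfolding Gset_def by blast
        qed
      next
        case n3: False
        show ?thesis
        proof (cases "4 \<in> X")
          case True
          hence tt: "t = {4}" using n1 n2 n3 unfolding t_def by auto
          have "X \<in> Img n {4} (k-2)" by (rule finish[OF Xtr rs cX tt]) (use k1 assms in simp)
          thus ?thesis unfolding Gset_def by blast
        next
          case False
          hence tt: "t = {}" using n1 n2 n3 unfolding t_def by auto
          have "X \<in> Img n {} (k-2)" by (rule finish[OF Xtr rs cX tt]) (use k2[OF tt] assms in simp)
          thus ?thesis unfolding Gset_def by blast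
        qed
      qed
    qed
  qed
qed



lemma img_tr: "X \<in> Img n t b \<Longrightarrow> t \<subseteq> {1,2,3,4} \<Longrightarrow>
   (1 \<in> X \<longleftrightarrow> 1 \<in> t) \<and> (2 \<in> X \<longleftrightarrow> 2 \<in> t) \<and> (3 \<in> X \<longleftrightarrow> 3 \<in> t) \<and> (4 \<in> X \<longleftrightarrow> 4 \<in> t)"
  unfolding Img_def Low_def by auto

lemma card_Img:
  assumes "t \<subseteq> {1,2,3,4}"
  shows "card (Img n t b) = (\<Sum>i=0..b. (n-4) choose i)"
proof -
  have t4: "\<forall>x\<in>t. x \<le> 4" using assms by auto
  have "inj_on (\<lambda>r. t \<union> r) (Low n b)"
  proof (rule inj_onI)
    fix r1 r2 assume "r1 \<in> Low n b" "r2 \<in> Low n b" "t \<union> r1 = t \<union> r2"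
    hence "\<forall>x\<in>r1. 5 \<le> x" "\<forall>x\<in>r2. 5 \<le> x" "t \<union> r1 = t \<union> r2" unfolding Low_def by auto
    thus "r1 = r2" using t4 by (metis Un_iff not_less_eq_eq numeral_le_iff semiring_norm(68,69,72) set_eq_iff
        Suc_leI le_trans eval_nat_numeral(3) eval_nat_numeral(2) less_Suc_eq) 
  qed
  hence "card (Img n t b) = card (Low n b)" unfolding Img_def by (rule card_image)
  also have "\<dots> = (\<Sum>i=0..b. card {5..n} choose i)" unfolding Low_def by (rule card_low) simp
  finally show ?thesis by simp
qed

lemma fin_Img: "finite (Img n t b)"
  unfolding Img_def Low_def by (rule finite_imageI) (rule finite_subset[of _ "Pow {5..n}"], auto)

lemma img_trace: "X \<in> Img n t b \<Longrightarrow> t \<subseteq> {1,2,3,4} \<Longrightarrow> X \<inter> {1,2,3,4} = t"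
  unfolding Img_def Low_def by auto

lemma img_disj: "t \<subseteq> {1,2,3,4} \<Longrightarrow> t' \<subseteq> {1,2,3,4} \<Longrightarrow> t \<noteq> t' \<Longrightarrow> Img n t b \<inter> Img n t' b' = {}"
  using img_trace by blast

lemma card_Gset: "card (Gset n k) = 5 * (\<Sum>i=0..k-2. (n-4) choose i) + 3 * (\<Sum>i=0..k-3. (n-4) choose i)"
proof -
  let ?I = "Img n"
  have c: "\<And>A B. finite A \<Longrightarrow> finite B \<Longrightarrow> A \<inter> B = {} \<Longrightarrow> card (A \<union> B) = card A + card B"
    by (rule card_Un_disjoint)
  note tr = img_tr
  have "card (Gset n k) = card (?I {} (k-2)) + card (?I {1} (k-2)) + card (?I {2} (k-2)) + card (?I {3} (k-2))
     + card (?I {4} (k-2)) + card (?I {2,3} (k-3)) + card (?I {2,4} (k-3)) + card (?I {3,4} (k-3))"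
    unfolding Gset_def
    apply (subst c, simp add: fin_Img, simp add: fin_Img, simp only: Int_Un_distrib2 Un_empty, (rule conjI | rule img_disj, simp, simp, simp add: doubleton_eq_iff)+)+
    by (subst c) (simp_all add: fin_Img img_disj)
  also have "\<dots> = 5 * (\<Sum>i=0..k-2. (n-4) choose i) + 3 * (\<Sum>i=0..k-3. (n-4) choose i)"
    by (simp add: card_Img)
  finally show ?thesis .
qed

lemma D_star:
  assumes "k \<ge> 1" "n > 2*k"
  shows "diff_family (star1 n k) = {X. X \<subseteq> {2..n} \<and> card X \<le> k-1}"
proof
  show "diff_family (star1 n k) \<subseteq> {X. X \<subseteq> {2..n} \<and> card X \<le> k-1}"
  proof
    fix X assume "X \<in> diff_family (star1 n k)"
    then obtain A B where AB: "X = A - B" "A \<in> star1 n k" "B \<in> star1 n k" unfolding diff_family_def by blast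
    have A: "A \<subseteq> {1..n}" "card A = k" "1 \<in> A" "finite A"
      using AB(2) finite_subset[of A "{1..n}"] unfolding star1_def ksubsets_def by auto
    have "1 \<in> B" using AB(3) unfolding star1_def by auto
    hence sub: "X \<subseteq> A - {1}" using AB(1) by auto
    hence "card X \<le> k - 1" using card_mono[of "A - {1}" X] A by auto
    moreover have "X \<subseteq> {2..n}"
    proof
      fix x assume "x \<in> X"
      hence "x \<in> A" "x \<noteq> 1" using sub by auto
      hence "x \<in> {1..n}" "x \<noteq> 1" using A(1) by auto
      thus "x \<in> {2..n}" by auto
    qed
    ultimately show "X \<in> {X. X \<subseteq> {2..n} \<and> card X \<le> k-1}" by simp
  qed
next
  show "{X. X \<subseteq> {2..n} \<and> card X \<le> k-1} \<subseteq> diff_family (star1 n k)"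
  proof
    fix X assume "X \<in> {X. X \<subseteq> {2..n} \<and> card X \<le> k-1}"
    hence X: "X \<subseteq> {2..n}" "card X \<le> k-1" by auto
    have fX: "finite X" using X(1) finite_subset by blast
    have n1: "1 \<notin> X" using X(1) by auto
    have cA: "card (insert 1 X) = card X + 1" using fX n1 by simp
    have cW: "card ({2..n} - X) = (n - 1) - card X" using card_Diff_subset[OF fX X(1)] by simp
    have "insert 1 X - {1} \<in> diff_family {A \<in> ksubsets n k. 1 \<in> A}"
      by (rule in_D_gen[where P="\<lambda>A. 1 \<in> A" and W="{2..n} - X"]) (use X cA cW assms in auto)
    moreover have "insert 1 X - {1} = X" using n1 by auto
    ultimately show "X \<in> diff_family (star1 n k)" unfolding star1_def by simp
  qed
qed

lemma card_D_star:
  assumes "k \<ge> 1" "n > 2*k"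
  shows "card (diff_family (star1 n k)) = (\<Sum>l<k. (n-1) choose l)"
proof -
  have "card (diff_family (star1 n k)) = (\<Sum>i=0..k-1. card {2..n} choose i)"
    unfolding D_star[OF assms] by (rule card_low) simp
  also have "\<dots> = (\<Sum>i=0..k-1. (n-1) choose i)" by simp
  also have "{0..k-1} = {..<k}" using assms(1) by auto
  finally show ?thesis .
qed



theorem mainTheorem11:
  fixes n k :: nat
  assumes "k \<ge> 4" and "n > 2 * k"
  shows "card (diff_family (A3 n k))
           = 5 * (\<Sum>i=0..k-2. (n-4) choose i) + 3 * (\<Sum>i=0..k-3. (n-4) choose i)
       \<and> int (card (diff_family (star1 n k))) - int (card (diff_family (A3 n k)))
           = int ((n-4) choose (k-1)) - int ((n-3) choose (k-2))
       \<and> ((int n - int k - 1) * (int n - int k - 2) < (int n - 3) * (int k - 1) \<longrightarrow>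
           intersecting (A3 n k) \<and>
           card (diff_family (A3 n k)) > (\<Sum>l<k. (n-1) choose l))"
proof -
  obtain j where kj: "k = j + 4" using le_Suc_ex[OF assms(1)] by (auto simp: add.commute)
  have "n \<ge> 4" using assms by simp
  then obtain m where nm: "n = m + 4" using le_Suc_ex[of 4 n] by (auto simp: add.commute)
  have mj: "m \<ge> 2*j + 5" using assms(2) kj nm by simp
  have DA: "diff_family (A3 n k) = Gset n k" using D_sub_Gset[OF assms] Gset_sub[OF assms] by blast
  have c1: "card (diff_family (A3 n k)) = 5 * (\<Sum>i=0..k-2. (n-4) choose i) + 3 * (\<Sum>i=0..k-3. (n-4) choose i)"
    unfolding DA by (rule card_Gset)
  have c2: "card (diff_family (star1 n k)) = (\<Sum>l<k. (n-1) choose l)"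
    by (rule card_D_star) (use assms in auto)
  define S where "S N b = (\<Sum>i=0..b. N choose i)" for N b
  have SR: "\<And>N b. S (Suc N) (Suc b) = S N (Suc b) + S N b" unfolding S_def by (rule Srec)
  have SS: "\<And>N b. S N (Suc b) = S N b + (N choose Suc b)" unfolding S_def by simp
  have h: "n - 4 = m" "k - 2 = Suc (Suc j)" "k - 3 = Suc j" "k - 1 = Suc (Suc (Suc j))"
      "n - 3 = Suc m" "n - 1 = Suc (Suc (Suc m))" using kj nm by simp_all
  have lt: "{..<k} = {0..Suc (Suc (Suc j))}" using kj by auto
  have cA: "card (diff_family (A3 n k)) = 5 * S m (Suc (Suc j)) + 3 * S m (Suc j)"
    using c1 unfolding h S_def .
  have cS: "card (diff_family (star1 n k)) = S (Suc (Suc (Suc m))) (Suc (Suc (Suc j)))"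
    using c2 unfolding h lt S_def .
  have e1: "S (Suc (Suc (Suc m))) (Suc (Suc (Suc j))) =
      S m (Suc (Suc (Suc j))) + 3 * S m (Suc (Suc j)) + 3 * S m (Suc j) + S m j"
    by (simp add: SR)
  have e2: "S m (Suc (Suc (Suc j))) = S m (Suc (Suc j)) + (m choose Suc (Suc (Suc j)))"
    "S m (Suc (Suc j)) = S m (Suc j) + (m choose Suc (Suc j))"
    "S m (Suc j) = S m j + (m choose Suc j)" using SS by blast+
  have e3: "Suc m choose Suc (Suc j) = (m choose Suc j) + (m choose Suc (Suc j))" by simp
  have part2: "int (card (diff_family (star1 n k))) - int (card (diff_family (A3 n k)))
           = int ((n-4) choose (k-1)) - int ((n-3) choose (k-2))"
    unfolding h cA cS e1 using e2 e3 by simp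
  have inter: "intersecting (A3 n k)"
    unfolding intersecting_def using A3_good good_inter by blast
  have part3: "card (diff_family (A3 n k)) > (\<Sum>l<k. (n-1) choose l)"
    if cond: "(int n - int k - 1) * (int n - int k - 2) < (int n - 3) * (int k - 1)"
  proof -
    define a where "a = m choose (j+3)"
    define b where "b = Suc m choose (j+2)"
    have bid: "a * ((j+3) * (m+1)) = b * ((m-j-1)*(m-j-2))"
      unfolding a_def b_def by (rule binom_id) (use mj in simp)
    have bpos: "b > 0" unfolding b_def using mj by simp
    have Q: "int ((m-j-1)*(m-j-2)) = (int n - int k - 1) * (int n - int k - 2)"
    proof -
      have q1: "int (m-j-1) = int m - int j - 1" using mj by (simp add: of_nat_diff)
      have q2: "int (m-j-2) = int m - int j - 2" using mj by (simp add: of_nat_diff)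
      show ?thesis by (simp only: of_nat_mult q1 q2) (simp add: kj nm)
    qed
    have P: "int ((j+3) * (m+1)) = (int n - 3) * (int k - 1)"
      using kj nm by (simp add: algebra_simps)
    have QP: "(m-j-1)*(m-j-2) < (j+3) * (m+1)" using cond Q P by linarith
    have "a < b"
    proof (rule ccontr)
      assume "\<not> a < b"
      hence "b * ((j+3) * (m+1)) \<le> a * ((j+3) * (m+1))" by simp
      moreover have "b * ((m-j-1)*(m-j-2)) < b * ((j+3) * (m+1))" using QP bpos by simp
      ultimately show False using bid by linarith
    qed
    have "int (card (diff_family (star1 n k))) < int (card (diff_family (A3 n k)))"
      using part2 \<open>a < b\<close> unfolding a_def b_def h by (simp add: numeral_eq_Suc)
    hence "card (diff_family (star1 n k)) < card (diff_family (A3 n k))" by linarith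
    thus ?thesis using c2 by simp
  qed
  show ?thesis using c1 part2 inter part3 by blast
qed

end
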